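(* Let $d\ge 1$ and $\lambda>0$, and let $X_1,X_2,\ldots$ be i.i.d. random vectors in $\mathbb{R}^d$ whose $d$ coordinates are i.i.d. exponential random variables with parameter $\lambda$. Let $\{y_n\}$ be any sequence of positive edge distances and let $S=\sum_n n y_n^d$. For each $n$ let $G_n(y_n)$ be the graph on vertex set $\{X_1,\ldots,X_n\}$ in which $X_i$ and $X_j$ ($i\neq j$) are joined by an edge if and only if $\|X_i-X_j\|\le y_n$, and let $\Delta_n(y_n)$ be its maximum vertex degree. Then: 1. If $S<\infty$ and $y_n$ is non-increasing, then $P[\Delta_n(y_n)\ge 1 \text{ i.o.}]=0$. 2. If $S=\infty$, then $P[\Delta_n(y_n)\ge 1\text{ i.o.}]=1$.
   Context: The norm $\|\cdot\|$ is the $\ell_\infty$ norm on $\mathbb{R}^d$. The degree of $X_i$ in $G_n(y_n)$ is $\sum_{1\le j\ne i\le n}1_{\{\|X_i-X_j\|\le y_n\}}$, and $\Delta_n(y_n)$ is the maximum of these degrees over $1\le i\le n$; "i.o." means for infinitely many $n$. *)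

theory Defs
  imports "HOL-Probability.Probability"
begin

definition linf_dist :: "real ^ 'd \<Rightarrow> real ^ 'd \<Rightarrow> real" where
  "linf_dist x y = Max (range (\<lambda>k. \<bar>x $ k - y $ k\<bar>))"

definition rgg_degree :: "(nat \<Rightarrow> real ^ 'd) \<Rightarrow> nat \<Rightarrow> real \<Rightarrow> nat \<Rightarrow> nat" where
  "rgg_degree x n r i = card {j \<in> {1..n}. j \<noteq> i \<and> linf_dist (x i) (x j) \<le> r}"

definition rgg_max_degree :: "(nat \<Rightarrow> real ^ 'd) \<Rightarrow> nat \<Rightarrow> real \<Rightarrow> nat" where
  "rgg_max_degree x n r = Max (insert 0 ((\<lambda>i. rgg_degree x n r i) ` {1..n}))"

end

theory Submission
  imports Defs
begin


lemma linf_le_iff: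
  fixes x y :: "real ^ 'd"
  shows "linf_dist x y \<le> r \<longleftrightarrow> (\<forall>k. \<bar>x $ k - y $ k\<bar> \<le> r)"
  unfolding linf_dist_def by (subst Max_le_iff) auto

lemma linf_sym: "linf_dist x y = linf_dist y x"
  unfolding linf_dist_def by (simp add: abs_minus_commute)

lemma maxdeg_ge1:
  "rgg_max_degree x n r \<ge> 1 \<longleftrightarrow> (\<exists>i\<in>{1..n}. \<exists>j\<in>{1..n}. j \<noteq> i \<and> linf_dist (x i) (x j) \<le> r)"
proof -
  have "rgg_max_degree x n r \<ge> 1 \<longleftrightarrow> (\<exists>i\<in>{1..n}. rgg_degree x n r i \<ge> 1)"
    unfolding rgg_max_degree_def by (subst Max_ge_iff) auto
  also have "\<dots> \<longleftrightarrow> (\<exists>i\<in>{1..n}. \<exists>j\<in>{1..n}. j \<noteq> i \<and> linf_dist (x i) (x j) \<le> r)"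
    unfolding rgg_degree_def
    by (intro bex_cong refl) (auto simp: Suc_le_eq card_gt_0_iff)
  finally show ?thesis .
qed

locale rgg = prob_space M for M :: "'a measure" +
  fixes X :: "nat \<Rightarrow> 'a \<Rightarrow> real ^ 'd" and l :: real
  assumes lpos: "l > 0"
    and ind: "indep_vars (\<lambda>_. borel) (\<lambda>(n, k) \<omega>. X n \<omega> $ k) UNIV"
    and dist: "\<And>n k. distributed M lborel (\<lambda>\<omega>. X n \<omega> $ k) (exponential_density l)"
begin

lemma meas[measurable]: "(\<lambda>\<omega>. X n \<omega> $ k) \<in> borel_measurable M"
  using distributed_measurable[OF dist[of n k]] by simp

definition F :: "real \<Rightarrow> real" where "F a = 1 - exp (- max a 0 * l)"

lemma cdf: "prob {\<omega>\<in>space M. X n \<omega> $ k \<le> a} = F a"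
proof (cases "a \<ge> 0")
  case True
  then show ?thesis using exponential_distributedD_le[OF dist True lpos] by (simp add: F_def)
next
  case False
  have "prob {\<omega>\<in>space M. X n \<omega> $ k \<le> a} \<le> prob {\<omega>\<in>space M. X n \<omega> $ k \<le> 0}"
    using False by (intro finite_measure_mono) auto
  also have "\<dots> = 0" using exponential_distributedD_le[OF dist _ lpos, of 0] by simp
  finally show ?thesis using False measure_nonneg[of M "{\<omega>\<in>space M. X n \<omega> $ k \<le> a}"] by (simp add: F_def)
qed

lemma tail: "a \<ge> 0 \<Longrightarrow> prob {\<omega>\<in>space M. a < X n \<omega> $ k} = exp (- a * l)"
  using exponential_distributedD_gt[OF dist _ lpos] by simp

lemma F_mono: "a \<le> b \<Longrightarrow> F a \<le> F b"
  unfolding F_def using lpos by (auto intro!: mult_right_mono simp: max_def)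

lemma interval: "a \<le> b \<Longrightarrow> prob {\<omega>\<in>space M. X n \<omega> $ k \<in> {a<..b}} = F b - F a"
proof -
  assume ab: "a \<le> b"
  have "{\<omega>\<in>space M. X n \<omega> $ k \<in> {a<..b}} = {\<omega>\<in>space M. X n \<omega> $ k \<le> b} - {\<omega>\<in>space M. X n \<omega> $ k \<le> a}"
    by auto
  also have "prob \<dots> = prob {\<omega>\<in>space M. X n \<omega> $ k \<le> b} - prob {\<omega>\<in>space M. X n \<omega> $ k \<le> a}"
    using ab by (intro finite_measure_Diff) auto
  finally show ?thesis by (simp add: cdf)
qed

lemma F_lip: "a \<le> b \<Longrightarrow> F b - F a \<le> l * (b - a)"
proof -
  assume ab: "a \<le> b"
  have key: "1 - exp (- t) \<le> t" for t :: real using exp_ge_add_one_self[of "-t"] by simp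
  show ?thesis
  proof (cases "a \<ge> 0")
    case True
    have "F b - F a = exp (- a * l) - exp (- b * l)" using True ab by (simp add: F_def max_def)
    also have "\<dots> = exp (- a * l) * (1 - exp (- ((b - a) * l)))"
      by (simp add: algebra_simps flip: exp_add)
    also have "\<dots> \<le> 1 * ((b - a) * l)"
    proof (rule mult_mono)
      show "exp (- a * l) \<le> 1" using True lpos by simp
      show "1 - exp (- ((b - a) * l)) \<le> (b - a) * l" by (rule key)
    qed (use ab lpos in auto)
    finally show ?thesis by (simp add: algebra_simps)
  next
    case False
    then have "F a = 0" by (simp add: F_def)
    have "F b \<le> max b 0 * l" unfolding F_def using key[of "max b 0 * l"] by simp
    also have "\<dots> \<le> l * (b - a)" using False ab lpos mult_neg_pos[of a l] by (auto simp: max_def algebra_simps intro: mult_left_mono)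
    finally show ?thesis using \<open>F a = 0\<close> by simp
  qed
qed


abbreviation V :: "nat \<times> 'd \<Rightarrow> 'a \<Rightarrow> real" where "V \<equiv> (\<lambda>(n, k) \<omega>. X n \<omega> $ k)"

definition gens :: "(nat \<times> 'd) set \<Rightarrow> 'a set set" where
  "gens S = (\<Union>p\<in>S. sigma_sets (space M) {V p -` A \<inter> space M | A. A \<in> sets borel})"

definition gsig :: "(nat \<times> 'd) set \<Rightarrow> 'a measure" where
  "gsig S = sigma (space M) (gens S)"

lemma V_meas: "V p \<in> borel_measurable M"
  by (cases p) simp

lemma gens_sub: "gens S \<subseteq> Pow (space M)"
  unfolding gens_def
  by (auto dest!: sigma_sets_into_sp[rotated])

lemma gens_events: "gens S \<subseteq> events"
  unfolding gens_def
proof (intro UN_least sets.sigma_sets_subset)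
  fix p show "{V p -` A \<inter> space M |A. A \<in> sets borel} \<subseteq> events"
    using V_meas[of p] by (auto simp: measurable_def)
qed

lemma space_gsig[simp]: "space (gsig S) = space M"
  unfolding gsig_def using gens_sub by (simp add: space_measure_of)

lemma sets_gsig: "sets (gsig S) = sigma_sets (space M) (gens S)"
  unfolding gsig_def using gens_sub by (simp add: sets_measure_of)

lemma gsig_events: "sets (gsig S) \<subseteq> events"
  unfolding sets_gsig using gens_events by (rule sets.sigma_sets_subset)

lemma gsig_meas: "p \<in> S \<Longrightarrow> V p \<in> borel_measurable (gsig S)"
proof (rule measurableI)
  fix x assume "x \<in> space (gsig S)" then show "V p x \<in> space borel" by simp
next
  fix A :: "real set" assume "p \<in> S" "A \<in> sets borel"
  then have "V p -` A \<inter> space M \<in> gens S"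
    unfolding gens_def by (auto intro!: sigma_sets.Basic)
  then show "V p -` A \<inter> space (gsig S) \<in> sets (gsig S)"
    unfolding sets_gsig by (auto intro: sigma_sets.Basic)
qed

lemma gsig_meas': "(n, k) \<in> S \<Longrightarrow> (\<lambda>\<omega>. X n \<omega> $ k) \<in> borel_measurable (gsig S)"
  using gsig_meas[of "(n, k)" S] by simp

lemma indep_gsig:
  assumes disj: "disjoint_family_on I J"
    and G: "\<And>j. j \<in> J \<Longrightarrow> G j \<in> sets (gsig (I j))"
  shows "indep_events G J"
proof -
  let ?E = "\<lambda>p. sigma_sets (space M) {V p -` A \<inter> space M |A. A \<in> sets borel}"
  have i0: "indep_sets ?E UNIV" using ind unfolding indep_vars_def by simp
  have i1: "indep_sets ?E (\<Union>j\<in>J. I j)" by (rule indep_sets_mono_index[OF _ i0]) simp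
  have "indep_sets (\<lambda>j. sigma_sets (space M) (\<Union>p\<in>I j. ?E p)) J"
  proof (rule indep_sets_collect_sigma[OF i1 _ disj])
    fix p j
    have "sigma_algebra (space M) (?E p)"
      by (rule sigma_algebra_sigma_sets) (auto dest: sets.sets_into_space)
    then interpret S: sigma_algebra "space M" "?E p" .
    show "Int_stable (?E p)"
      by (rule Int_stableI) (rule S.Int)
  qed
  then have "indep_sets (\<lambda>j. sets (gsig (I j))) J"
    unfolding sets_gsig gens_def .
  then show ?thesis
    unfolding indep_events_def_alt
    by (rule indep_sets_mono_sets) (use G in auto)
qed

lemma prob_rect:
  assumes "finite J" "J \<noteq> {}" "\<And>p. p \<in> J \<Longrightarrow> A p \<in> sets borel"
  shows "prob {\<omega>\<in>space M. \<forall>p\<in>J. V p \<omega> \<in> A p} = (\<Prod>p\<in>J. prob {\<omega>\<in>space M. V p \<omega> \<in> A p})"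
proof -
  have "prob (\<Inter>p\<in>J. V p -` A p \<inter> space M) = (\<Prod>p\<in>J. prob (V p -` A p \<inter> space M))"
    by (rule indep_varsD[OF ind]) (use assms in auto)
  moreover have "(\<Inter>p\<in>J. V p -` A p \<inter> space M) = {\<omega>\<in>space M. \<forall>p\<in>J. V p \<omega> \<in> A p}"
    using assms(2) by auto
  moreover have "\<And>p. V p -` A p \<inter> space M = {\<omega>\<in>space M. V p \<omega> \<in> A p}" by auto
  ultimately show ?thesis by simp
qed

end


lemma cell_ex:
  fixes x r :: real
  assumes "0 < x" "0 < r"
  shows "\<exists>t::nat. real t * r < x \<and> x \<le> (real t + 1) * r \<and> (x \<le> real K * r \<longrightarrow> t < K)"
proof -
  define c where "c = \<lceil>x / r\<rceil>"
  have xr: "0 < x / r" using assms by simp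
  have c1: "c \<ge> 1" unfolding c_def using xr by (simp add: one_le_ceiling)
  have lo: "real_of_int c - 1 < x / r" unfolding c_def by linarith
  have hi: "x / r \<le> real_of_int c" unfolding c_def by simp
  define t where "t = nat (c - 1)"
  have tc: "real t = real_of_int c - 1" unfolding t_def using c1 by simp
  show ?thesis
  proof (intro exI conjI impI)
    have "real t * r < x / r * r" using lo tc assms by (intro mult_strict_right_mono) auto
    then show "real t * r < x" using assms by simp
    show "x \<le> (real t + 1) * r" using hi assms tc by (simp add: field_simps)
    assume "x \<le> real K * r"
    then have "x / r \<le> real K" using assms by (simp add: field_simps)
    then have "c \<le> int K" unfolding c_def by (simp add: ceiling_le_iff)
    then show "t < K" unfolding t_def using c1 by simp
  qed
qed

context rgg begin

lemma F_le1: "F x \<le> 1" unfolding F_def by simp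
lemma F0: "F 0 = 0" unfolding F_def by simp

lemma exp_lim: "r > 0 \<Longrightarrow> (\<lambda>K::nat. c + b * exp (- (real K * r) * l)) \<longlonglongrightarrow> c"
proof -
  assume r: "r > 0"
  have e: "exp (- (real K * r) * l) = exp (- (r * l)) ^ K" for K
    by (subst exp_of_nat_mult[symmetric]) (simp add: algebra_simps)
  have "(\<lambda>K. exp (- (r * l)) ^ K) \<longlonglongrightarrow> 0"
  proof (rule LIMSEQ_power_zero)
    have "r * l > 0" using r lpos by simp
    then show "norm (exp (- (r * l))) < 1" by simp
  qed
  from tendsto_add[OF tendsto_const[of c] tendsto_mult_left[OF this, of b]]
  have "(\<lambda>K. c + b * exp (- (r * l)) ^ K) \<longlonglongrightarrow> c + b * 0" .
  then show ?thesis unfolding e by simp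
qed

lemma ev_borel: "S \<in> sets borel \<Longrightarrow> {\<omega>\<in>space M. X a \<omega> $ b \<in> S} \<in> events"
  using measurable_sets[OF meas, of S a b] by (simp add: vimage_def Int_def conj_commute)

lemma ub':
  assumes Jv: "finite Jv" "i \<notin> Jv" and r: "r > 0" and Jne: "Jv \<noteq> {}"
  shows "prob {\<omega>\<in>space M. \<forall>j\<in>Jv. linf_dist (X i \<omega>) (X j \<omega>) \<le> r} \<le> (3*l*r)^(CARD('d)*card Jv)"
    (is "prob ?S \<le> ?c")
proof -
  define d where "d = CARD('d)"
  define Cint where "Cint t = {real t * r <.. (real t + 1) * r}" for t :: nat
  define Nint where "Nint t = {real t * r - r <.. real t * r + 2 * r}" for t :: nat
  define A where "A m p = (if fst p = i then Cint (m (snd p)) else Nint (m (snd p)))" for m :: "'d \<Rightarrow> nat" and p :: "nat \<times> 'd"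
  define q where "q t = F ((real t + 1) * r) - F (real t * r)" for t :: nat
  have q_nn: "q t \<ge> 0" for t 
  proof -
    have "real t * r \<le> (real t + 1) * r" using r by (simp add: distrib_right)
    then show ?thesis using F_mono unfolding q_def by fastforce
  qed
  have key: "prob ?S \<le> ?c + real d * exp (- (real K * r) * l)" for K :: nat
  proof -
    define \<Lambda> where "\<Lambda> = PiE (UNIV :: 'd set) (\<lambda>_. {..<K})"
    define R where "R m = {\<omega>\<in>space M. \<forall>p\<in>(insert i Jv) \<times> UNIV. V p \<omega> \<in> A m p}" for m
    define Bad where "Bad k = {\<omega>\<in>space M. X i \<omega> $ k \<le> 0} \<union> {\<omega>\<in>space M. real K * r < X i \<omega> $ k}" for k
    have finL: "finite \<Lambda>" unfolding \<Lambda>_def by (intro finite_PiE) auto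
    have A_borel: "A m p \<in> sets borel" for m p unfolding A_def Cint_def Nint_def by simp
    have R_ev: "R m \<in> events" for m unfolding R_def
      by (intro sets.sets_Collect_finite_All' sets.sets_Collect_finite_All) (use Jv A_borel ev_borel in auto)
    have Bad_ev: "Bad k \<in> events" for k unfolding Bad_def by measurable
    have S_ev: "?S \<in> events" unfolding linf_le_iff
      by (intro sets.sets_Collect_finite_All' sets.sets_Collect_countable_All) (use Jv Jne in auto)
    have cover: "?S \<subseteq> (\<Union>m\<in>\<Lambda>. R m) \<union> (\<Union>k. Bad k)"
    proof
      fix \<omega> assume w: "\<omega> \<in> ?S"
      show "\<omega> \<in> (\<Union>m\<in>\<Lambda>. R m) \<union> (\<Union>k. Bad k)"
      proof (cases "\<exists>k. \<omega> \<in> Bad k")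
        case True then show ?thesis by auto
      next
        case False
        then have pos: "0 < X i \<omega> $ k" and le: "X i \<omega> $ k \<le> real K * r" for k
          using w unfolding Bad_def by (auto simp: not_le not_less)
        have "\<exists>t. real t * r < X i \<omega> $ k \<and> X i \<omega> $ k \<le> (real t + 1) * r \<and> t < K" for k
          using cell_ex[OF pos[of k] r, of K] le[of k] by blast
        then obtain m where m: "\<And>k. real (m k) * r < X i \<omega> $ k \<and> X i \<omega> $ k \<le> (real (m k) + 1) * r \<and> m k < K"
          by metis
        have "m \<in> \<Lambda>" unfolding \<Lambda>_def using m by auto
        moreover have "\<omega> \<in> R m"
          unfolding R_def
        proof (intro CollectI conjI ballI)
          show "\<omega> \<in> space M" using w by simp
          fix p assume p: "p \<in> insert i Jv \<times> (UNIV :: 'd set)"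
          obtain n k where pnk: "p = (n, k)" by force
          show "V p \<omega> \<in> A m p"
          proof (cases "n = i")
            case True then show ?thesis using m[of k] by (simp add: pnk A_def Cint_def)
          next
            case False
            then have nJ: "n \<in> Jv" using p pnk by auto
            then have "\<bar>X i \<omega> $ k - X n \<omega> $ k\<bar> \<le> r" using w by (auto simp: linf_le_iff)
            then show ?thesis using m[of k] False by (auto simp: pnk A_def Nint_def algebra_simps)
          qed
        qed
        ultimately show ?thesis by blast
      qed
    qed
    have Cint_eq: "prob {\<omega>\<in>space M. X n \<omega> $ k \<in> Cint t} = q t" for n k t
      unfolding Cint_def q_def using r by (intro interval) (simp add: distrib_right)
    have Nint_le: "prob {\<omega>\<in>space M. X n \<omega> $ k \<in> Nint t} \<le> 3 * l * r" for n k t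
    proof -
      have "prob {\<omega>\<in>space M. X n \<omega> $ k \<in> Nint t} = F (real t * r + 2 * r) - F (real t * r - r)"
        unfolding Nint_def using r by (intro interval) simp
      also have "\<dots> \<le> l * ((real t * r + 2 * r) - (real t * r - r))" using r by (intro F_lip) simp
      finally show ?thesis by (simp add: algebra_simps)
    qed
    have R_le: "prob (R m) \<le> (\<Prod>k\<in>UNIV. q (m k)) * ?c" for m
    proof -
      have "prob (R m) = (\<Prod>p\<in>insert i Jv \<times> UNIV. prob {\<omega>\<in>space M. V p \<omega> \<in> A m p})"
        unfolding R_def by (intro prob_rect) (use Jv A_borel in auto)
      also have "\<dots> = (\<Prod>n\<in>insert i Jv. \<Prod>k\<in>UNIV. prob {\<omega>\<in>space M. X n \<omega> $ k \<in> A m (n, k)})"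
        by (subst prod.cartesian_product) (simp add: case_prod_beta)
      also have "\<dots> = (\<Prod>k\<in>UNIV. q (m k)) * (\<Prod>n\<in>Jv. \<Prod>k\<in>UNIV. prob {\<omega>\<in>space M. X n \<omega> $ k \<in> Nint (m k)})"
        using Jv by (subst prod.insert) (auto simp: A_def Cint_eq intro!: prod.cong)
      also have "\<dots> \<le> (\<Prod>k\<in>UNIV. q (m k)) * (\<Prod>n\<in>Jv. \<Prod>k\<in>(UNIV::'d set). 3 * l * r)"
        by (intro mult_left_mono prod_mono conjI Nint_le measure_nonneg prod_nonneg q_nn ballI)
      also have "(\<Prod>n\<in>Jv. \<Prod>k\<in>(UNIV::'d set). 3 * l * r) = ?c"
        by (simp add: power_mult)
      finally show ?thesis .
    qed
    have sumq: "(\<Sum>m\<in>\<Lambda>. \<Prod>k\<in>UNIV. q (m k)) \<le> 1"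
    proof -
      have tel: "(\<Sum>t\<in>{..<K}. q t) = F (real K * r) - F 0"
        unfolding q_def using sum_lessThan_telescope[of "\<lambda>t. F (real t * r)" K] by (simp add: add.commute)
      have "(\<Sum>m\<in>\<Lambda>. \<Prod>k\<in>UNIV. q (m k)) = (\<Prod>k\<in>(UNIV::'d set). \<Sum>t\<in>{..<K}. q t)"
        unfolding \<Lambda>_def by (subst prod_sum_PiE) auto
      also have "\<dots> = (\<Prod>k\<in>(UNIV::'d set). F (real K * r) - F 0)" by (simp add: tel)
      also have "\<dots> \<le> 1"
        using F_le1[of "real K * r"] F0 F_mono[of 0 "real K * r"] r by (intro prod_le_1) auto
      finally show ?thesis .
    qed
    have "prob ?S \<le> prob ((\<Union>m\<in>\<Lambda>. R m) \<union> (\<Union>k. Bad k))"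
      by (intro finite_measure_mono cover) (use finL R_ev Bad_ev in auto)
    also have "\<dots> \<le> prob (\<Union>m\<in>\<Lambda>. R m) + prob (\<Union>k\<in>UNIV. Bad k)"
      by (intro measure_Un_le) (use finL R_ev Bad_ev in auto)
    also have "\<dots> \<le> (\<Sum>m\<in>\<Lambda>. prob (R m)) + (\<Sum>k\<in>UNIV. prob (Bad k))"
      by (intro add_mono finite_measure_subadditive_finite) (use finL R_ev Bad_ev in auto)
    also have "\<dots> \<le> (\<Sum>m\<in>\<Lambda>. (\<Prod>k\<in>UNIV. q (m k)) * ?c) + (\<Sum>k\<in>(UNIV::'d set). exp (- (real K * r) * l))"
    proof (intro add_mono sum_mono R_le)
      fix k :: 'd
      have "prob (Bad k) \<le> prob {\<omega>\<in>space M. X i \<omega> $ k \<le> 0} + prob {\<omega>\<in>space M. real K * r < X i \<omega> $ k}"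
        unfolding Bad_def by (intro measure_Un_le) auto
      also have "\<dots> = exp (- (real K * r) * l)" using cdf[of i k 0] F0 tail[of "real K * r" i k] r by simp
      finally show "prob (Bad k) \<le> exp (- (real K * r) * l)" .
    qed
    also have "\<dots> = (\<Sum>m\<in>\<Lambda>. \<Prod>k\<in>UNIV. q (m k)) * ?c + real d * exp (- (real K * r) * l)"
      by (simp add: sum_distrib_right d_def)
    also have "\<dots> \<le> 1 * ?c + real d * exp (- (real K * r) * l)"
      using sumq lpos r by (intro add_mono mult_right_mono) auto
    finally show ?thesis by simp
  qed
  show ?thesis
  proof (rule LIMSEQ_le_const)
    show "(\<lambda>K. ?c + real d * exp (- (real K * r) * l)) \<longlonglongrightarrow> ?c" by (rule exp_lim[OF r])
    show "\<exists>N. \<forall>K\<ge>N. prob ?S \<le> ?c + real d * exp (- (real K * r) * l)" using key by blast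
  qed
qed

lemma ub:
  assumes Jv: "finite Jv" "i \<notin> Jv" and r: "r > 0"
  shows "prob {\<omega>\<in>space M. \<forall>j\<in>Jv. linf_dist (X i \<omega>) (X j \<omega>) \<le> r} \<le> (3*l*r)^(CARD('d)*card Jv)"
proof (cases "Jv = {}")
  case True then show ?thesis by simp
qed (use ub'[OF assms] in auto)

end


lemma geom_sq:
  fixes x :: real assumes "0 \<le> x" "x < 1"
  shows "(\<Sum>t<K. (x ^ t * (1 - x))\<^sup>2) = (1 - x) * (1 - (x\<^sup>2) ^ K) / (1 + x)"
proof -
  have x2: "x\<^sup>2 \<noteq> 1" using assms by (simp add: power_less_one_iff less_imp_neq)
  have "(\<Sum>t<K. (x ^ t * (1 - x))\<^sup>2) = (1 - x)\<^sup>2 * (\<Sum>t<K. (x\<^sup>2) ^ t)"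
    by (simp add: sum_distrib_left power_mult_distrib power_mult[symmetric] mult.commute)
  also have "\<dots> = (1 - x)\<^sup>2 * ((1 - (x\<^sup>2) ^ K) / (1 - x\<^sup>2))"
    using sum_gp_strict[of "x\<^sup>2" K] x2 by simp
  also have "\<dots> = (1 - x) * (1 - (x\<^sup>2) ^ K) / (1 + x)"
  proof -
    define y where "y = (x\<^sup>2) ^ K"
    have e: "1 - x\<^sup>2 = (1 - x) * (1 + x)" by (simp add: power2_eq_square algebra_simps)
    have nz: "1 - x \<noteq> 0" "1 + x \<noteq> 0" using assms by auto
    have "(1 - x)\<^sup>2 * ((1 - y) / ((1 - x) * (1 + x))) = (1 - x) * (1 - y) / (1 + x)"
      using nz by (simp add: power2_eq_square)
    then have "(1 - x)\<^sup>2 * ((1 - y) / (1 - x\<^sup>2)) = (1 - x) * (1 - y) / (1 + x)"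
      unfolding e .
    then show ?thesis unfolding y_def .
  qed
  finally show ?thesis .
qed

lemma one_minus_exp_ge: "0 \<le> (t::real) \<Longrightarrow> t \<le> 1 \<Longrightarrow> t / 2 \<le> 1 - exp (- t)"
proof -
  assume t: "0 \<le> t" "t \<le> 1"
  have "1 + t \<le> exp t" using exp_ge_add_one_self[of t] by simp
  then have "exp (- t) \<le> 1 / (1 + t)" using t by (simp add: exp_minus field_simps)
  moreover have "1 / (1 + t) \<le> 1 - t / 2"
  proof -
    have "t * t \<le> t" using t by (simp add: mult_left_le_one_le)
    then show ?thesis using t by (simp add: field_simps)
  qed
  ultimately show ?thesis by simp
qed

context rgg begin

lemma lb:
  assumes ij: "i \<noteq> j" and r: "r > 0" "l * r \<le> 1"
  shows "(l * r / 8) ^ CARD('d) \<le> prob {\<omega>\<in>space M. linf_dist (X i \<omega>) (X j \<omega>) \<le> r}"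
    (is "_ \<le> prob ?S")
proof -
  define x where "x = exp (- (r * l))"
  have x: "0 \<le> x" "x < 1" unfolding x_def using r lpos by auto
  have x2: "x\<^sup>2 < 1" using x by (simp add: power_less_one_iff)
  have lim: "(\<lambda>K. (x\<^sup>2) ^ K) \<longlonglongrightarrow> 0" by (rule LIMSEQ_power_zero) (use x x2 in simp)
  have "eventually (\<lambda>K. (x\<^sup>2) ^ K < 1/2) sequentially" using order_tendstoD(2)[OF lim, of "1/2"] by simp
  then obtain K where K: "(x\<^sup>2) ^ K < 1/2" by (auto simp: eventually_sequentially)
  define Cint where "Cint t = {real t * r <.. (real t + 1) * r}" for t :: nat
  define q where "q t = x ^ t * (1 - x)" for t :: nat
  define \<Lambda> where "\<Lambda> = PiE (UNIV :: 'd set) (\<lambda>_. {..<K})"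
  define R where "R m = {\<omega>\<in>space M. \<forall>p\<in>{i, j} \<times> UNIV. V p \<omega> \<in> Cint (m (snd p))}" for m :: "'d \<Rightarrow> nat"
  have finL: "finite \<Lambda>" unfolding \<Lambda>_def by (intro finite_PiE) auto
  have C_borel: "Cint t \<in> sets borel" for t unfolding Cint_def by simp
  have R_ev: "R m \<in> events" for m unfolding R_def
    by (intro sets.sets_Collect_finite_All' sets.sets_Collect_finite_All) (use C_borel ev_borel in auto)
  have S_ev: "?S \<in> events" unfolding linf_le_iff by measurable
  have xt: "exp (- (real t * r) * l) = x ^ t" for t
    unfolding x_def by (subst exp_of_nat_mult[symmetric]) (simp add: algebra_simps)
  have Fe: "F (real t * r) = 1 - x ^ t" for t
  proof -
    have m: "max (real t * r) 0 = real t * r" using r by simp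
    show ?thesis unfolding F_def m xt by (rule refl)
  qed
  have Cint_eq: "prob {\<omega>\<in>space M. X n \<omega> $ k \<in> Cint t} = q t" for n k t
  proof -
    have "prob {\<omega>\<in>space M. X n \<omega> $ k \<in> Cint t} = F ((real t + 1) * r) - F (real t * r)"
      unfolding Cint_def using r by (intro interval) (simp add: distrib_right)
    also have "\<dots> = x ^ t - x ^ (Suc t)"
    proof -
      have "(real t + 1) * r = real (Suc t) * r" by simp
      then show ?thesis by (simp only: Fe)
    qed
    finally show ?thesis by (simp add: q_def algebra_simps)
  qed
  have sub: "R m \<subseteq> ?S" for m
  proof
    fix \<omega> assume w: "\<omega> \<in> R m"
    have "\<bar>X i \<omega> $ k - X j \<omega> $ k\<bar> \<le> r" for k
    proof -
      have "V (i, k) \<omega> \<in> Cint (m k)" "V (j, k) \<omega> \<in> Cint (m k)" using w unfolding R_def by auto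
      then show ?thesis unfolding Cint_def by (auto simp: algebra_simps abs_le_iff)
    qed
    then have "\<forall>k. \<bar>X i \<omega> $ k - X j \<omega> $ k\<bar> \<le> r" by blast
    then show "\<omega> \<in> ?S" using w by (simp add: R_def linf_le_iff)
  qed
  have disj: "disjoint_family_on R \<Lambda>"
    unfolding disjoint_family_on_def
  proof (intro ballI impI)
    fix m m' assume "m \<in> \<Lambda>" "m' \<in> \<Lambda>" "m \<noteq> m'"
    then obtain k where k: "m k \<noteq> m' k" by auto
    show "R m \<inter> R m' = {}"
    proof (rule ccontr)
      assume "R m \<inter> R m' \<noteq> {}"
      then obtain \<omega> where "\<omega> \<in> R m" "\<omega> \<in> R m'" by auto
      then have a: "X i \<omega> $ k \<in> Cint (m k)" "X i \<omega> $ k \<in> Cint (m' k)" unfolding R_def by auto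
      show False
      proof (cases "m k < m' k")
        case True
        then have "(real (m k) + 1) * r \<le> real (m' k) * r" using r by (intro mult_right_mono) auto
        then show False using a unfolding Cint_def by auto
      next
        case False
        then have "m' k < m k" using k by simp
        then have "(real (m' k) + 1) * r \<le> real (m k) * r" using r by (intro mult_right_mono) auto
        then show False using a unfolding Cint_def by auto
      qed
    qed
  qed
  have R_eq: "prob (R m) = (\<Prod>k\<in>UNIV. (q (m k))\<^sup>2)" for m
  proof -
    have "prob (R m) = (\<Prod>p\<in>{i, j} \<times> UNIV. prob {\<omega>\<in>space M. V p \<omega> \<in> Cint (m (snd p))})"
      unfolding R_def by (intro prob_rect) (use C_borel in auto)
    also have "\<dots> = (\<Prod>n\<in>{i, j}. \<Prod>k\<in>UNIV. prob {\<omega>\<in>space M. X n \<omega> $ k \<in> Cint (m k)})"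
      by (subst prod.cartesian_product) (simp add: case_prod_beta)
    also have "\<dots> = (\<Prod>k\<in>UNIV. q (m k)) * (\<Prod>k\<in>UNIV. q (m k))"
      using ij by (simp add: Cint_eq)
    also have "\<dots> = (\<Prod>k\<in>UNIV. (q (m k))\<^sup>2)"
      by (simp add: power2_eq_square prod.distrib)
    finally show ?thesis .
  qed
  have "(l * r / 8) ^ CARD('d) = (\<Prod>k\<in>(UNIV::'d set). l * r / 8)" by simp
  also have "\<dots> \<le> (\<Prod>k\<in>(UNIV::'d set). \<Sum>t\<in>{..<K}. (q t)\<^sup>2)"
  proof (rule prod_mono, rule conjI)
    fix k :: 'd
    show "0 \<le> l * r / 8" using lpos r by simp
    have "(\<Sum>t\<in>{..<K}. (q t)\<^sup>2) = (1 - x) * (1 - (x\<^sup>2) ^ K) / (1 + x)"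
      unfolding q_def by (rule geom_sq[OF x])
    also have "\<dots> \<ge> (1 - x) * (1/2) / 2"
      using x K by (intro frac_le mult_left_mono) auto
    finally have "(1 - x) / 4 \<le> (\<Sum>t\<in>{..<K}. (q t)\<^sup>2)" by simp
    moreover have "r * l / 2 \<le> 1 - x"
      unfolding x_def using r lpos by (intro one_minus_exp_ge) (auto simp: mult.commute)
    ultimately show "l * r / 8 \<le> (\<Sum>t\<in>{..<K}. (q t)\<^sup>2)" by (simp add: mult.commute)
  qed
  also have "\<dots> = (\<Sum>m\<in>\<Lambda>. \<Prod>k\<in>UNIV. (q (m k))\<^sup>2)"
    unfolding \<Lambda>_def by (subst prod_sum_PiE) auto
  also have "\<dots> = (\<Sum>m\<in>\<Lambda>. prob (R m))" by (simp add: R_eq)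
  also have "\<dots> = prob (\<Union>m\<in>\<Lambda>. R m)"
    by (rule finite_measure_finite_Union[symmetric]) (use finL R_ev disj in auto)
  also have "\<dots> \<le> prob ?S"
    by (intro finite_measure_mono S_ev) (use sub in auto)
  finally show ?thesis .
qed

end


lemma (in prob_space) bonf:
  assumes "finite P" "\<And>a. a \<in> P \<Longrightarrow> A a \<in> events"
  shows "(\<Sum>a\<in>P. prob (A a)) - (\<Sum>a\<in>P. \<Sum>b\<in>P - {a}. prob (A a \<inter> A b)) \<le> prob (\<Union>a\<in>P. A a)"
  using assms
proof (induction P rule: finite_induct)
  case empty then show ?case by simp
next
  case (insert c P)
  define U where "U = (\<Union>a\<in>P. A a)"
  have Ac: "A c \<in> events" using insert by auto
  have U: "U \<in> events" unfolding U_def using insert by auto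
  have IH: "(\<Sum>a\<in>P. prob (A a)) - (\<Sum>a\<in>P. \<Sum>b\<in>P - {a}. prob (A a \<inter> A b)) \<le> prob U"
    unfolding U_def using insert by auto
  have "prob (U \<inter> A c) = prob (\<Union>b\<in>P. A c \<inter> A b)" unfolding U_def by (rule arg_cong[where f=prob]) auto
  also have "\<dots> \<le> (\<Sum>b\<in>P. prob (A c \<inter> A b))"
    by (intro finite_measure_subadditive_finite) (use insert in auto)
  finally have UA: "prob (U \<inter> A c) \<le> (\<Sum>b\<in>P. prob (A c \<inter> A b))" .
  have un: "prob (\<Union>a\<in>insert c P. A a) = prob (A c) + prob U - prob (U \<inter> A c)"
  proof -
    have "(\<Union>a\<in>insert c P. A a) = A c \<union> U" unfolding U_def by auto
    then show ?thesis using finite_measure_Union'[OF Ac U] finite_measure_Diff'[OF U Ac] by simp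
  qed
  have dbl: "(\<Sum>a\<in>insert c P. \<Sum>b\<in>insert c P - {a}. prob (A a \<inter> A b))
      \<ge> (\<Sum>b\<in>P. prob (A c \<inter> A b)) + (\<Sum>a\<in>P. \<Sum>b\<in>P - {a}. prob (A a \<inter> A b))"
  proof -
    have "(\<Sum>a\<in>insert c P. \<Sum>b\<in>insert c P - {a}. prob (A a \<inter> A b))
        = (\<Sum>b\<in>insert c P - {c}. prob (A c \<inter> A b)) + (\<Sum>a\<in>P. \<Sum>b\<in>insert c P - {a}. prob (A a \<inter> A b))"
      using insert by (simp add: sum.insert)
    also have "insert c P - {c} = P" using insert by auto
    finally have e: "(\<Sum>a\<in>insert c P. \<Sum>b\<in>insert c P - {a}. prob (A a \<inter> A b))
        = (\<Sum>b\<in>P. prob (A c \<inter> A b)) + (\<Sum>a\<in>P. \<Sum>b\<in>insert c P - {a}. prob (A a \<inter> A b))" .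
    have "(\<Sum>a\<in>P. \<Sum>b\<in>P - {a}. prob (A a \<inter> A b)) \<le> (\<Sum>a\<in>P. \<Sum>b\<in>insert c P - {a}. prob (A a \<inter> A b))"
      by (intro sum_mono sum_mono2) (use insert in auto)
    then show ?thesis unfolding e by simp
  qed
  show ?case
    using IH UA un dbl insert by (simp add: sum.insert)
qed

context rgg begin

lemma pair_gsig:
  assumes "\<And>k. (i, k) \<in> S" "\<And>k. (j, k) \<in> S"
  shows "{\<omega>\<in>space M. linf_dist (X i \<omega>) (X j \<omega>) \<le> r} \<in> sets (gsig S)"
proof -
  have [measurable]: "(\<lambda>\<omega>. X i \<omega> $ k) \<in> borel_measurable (gsig S)" for k using assms(1) by (rule gsig_meas')
  have [measurable]: "(\<lambda>\<omega>. X j \<omega> $ k) \<in> borel_measurable (gsig S)" for k using assms(2) by (rule gsig_meas')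
  have "{\<omega>\<in>space (gsig S). \<forall>k. \<bar>X i \<omega> $ k - X j \<omega> $ k\<bar> \<le> r} \<in> sets (gsig S)" by measurable
  then show ?thesis by (simp add: linf_le_iff)
qed

lemma pair_ev: "{\<omega>\<in>space M. linf_dist (X i \<omega>) (X j \<omega>) \<le> r} \<in> events"
  using pair_gsig[of i UNIV j r] gsig_events by blast

abbreviation Aij where "Aij i j r \<equiv> {\<omega>\<in>space M. linf_dist (X i \<omega>) (X j \<omega>) \<le> r}"

lemma ub1: "i \<noteq> j \<Longrightarrow> r > 0 \<Longrightarrow> prob (Aij i j r) \<le> (3*l*r)^CARD('d)"
  using ub[of "{j}" i r] by simp

lemma pair2:
  assumes T: "T1 \<inter> T2 = {}" and a: "i \<in> T1" "j \<in> T2" "i' \<in> T1" "j' \<in> T2" "(i, j) \<noteq> (i', j')"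
    and r: "r > 0"
  shows "prob (Aij i j r \<inter> Aij i' j' r) \<le> (3*l*r)^(CARD('d)*2)"
proof -
  have ne: "i \<noteq> j" "i \<noteq> j'" "i' \<noteq> j" "i' \<noteq> j'" using T a by auto
  consider "i = i'" | "j = j'" | "i \<noteq> i'" "j \<noteq> j'" by blast
  then show ?thesis
  proof cases
    case 1
    then have jj: "j \<noteq> j'" using a by auto
    have "Aij i j r \<inter> Aij i' j' r = {\<omega>\<in>space M. \<forall>w\<in>{j, j'}. linf_dist (X i \<omega>) (X w \<omega>) \<le> r}"
      using 1 by auto
    moreover have "card {j, j'} = 2" using jj by simp
    ultimately show ?thesis using ub[of "{j, j'}" i r] ne r by simp
  next
    case 2
    then have ii: "i \<noteq> i'" using a by auto
    have "Aij i j r \<inter> Aij i' j' r = {\<omega>\<in>space M. \<forall>w\<in>{i, i'}. linf_dist (X j \<omega>) (X w \<omega>) \<le> r}"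
      using 2 by (auto simp: linf_sym)
    moreover have "card {i, i'} = 2" using ii by simp
    ultimately show ?thesis using ub[of "{i, i'}" j r] ne r by simp
  next
    case 3
    define I where "I b = (if b then {i, j} else {i', j'}) \<times> (UNIV :: 'd set)" for b
    define G where "G b = (if b then Aij i j r else Aij i' j' r)" for b
    have disj: "disjoint_family_on I UNIV"
      unfolding disjoint_family_on_def I_def using ne 3 by auto
    have "indep_events G UNIV"
    proof (rule indep_gsig[OF disj])
      fix b :: bool show "G b \<in> sets (gsig (I b))"
        unfolding G_def I_def by (cases b) (auto intro!: pair_gsig)
    qed
    then have "prob (\<Inter>b\<in>UNIV. G b) = (\<Prod>b\<in>UNIV. prob (G b))"
      unfolding indep_events_def by auto
    then have "prob (Aij i j r \<inter> Aij i' j' r) = prob (Aij i j r) * prob (Aij i' j' r)"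
      unfolding G_def by (simp add: UNIV_bool Int_commute)
    also have "\<dots> \<le> (3*l*r)^CARD('d) * (3*l*r)^CARD('d)"
      using ne r lpos by (intro mult_mono ub1) auto
    finally show ?thesis by (simp add: power_mult power2_eq_square)
  qed
qed

lemma block_lb:
  assumes T: "finite T1" "finite T2" "T1 \<inter> T2 = {}" "card T1 = L" "card T2 = L"
    and r: "r > 0" and small: "real L ^ 2 * (l*r)^CARD('d) \<le> (1/144)^CARD('d)"
  shows "real L ^ 2 * (l*r)^CARD('d) * (1/8)^CARD('d) / 2 \<le> prob {\<omega>\<in>space M. \<exists>i\<in>T1. \<exists>j\<in>T2. linf_dist (X i \<omega>) (X j \<omega>) \<le> r}"
    (is "_ \<le> prob ?F")
proof (cases "L = 0")
  case True then show ?thesis by simp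
next
  case False
  define d where "d = CARD('d)"
  have d1: "d \<ge> 1" unfolding d_def by (simp add: Suc_le_eq)
  define t where "t = (l*r)^d"
  define Mp where "Mp = real L ^ 2"
  have t0: "t \<ge> 0" unfolding t_def using lpos r by simp
  have Mp1: "Mp \<ge> 1" unfolding Mp_def using False by simp
  have Mpt: "Mp * t \<le> (1/144)^d" using small unfolding Mp_def t_def d_def .
  have lr: "l * r \<le> 1"
  proof (rule ccontr)
    assume "\<not> l * r \<le> 1"
    then have "(1/144::real)^d < (l*r)^d" using d1 by (intro power_strict_mono) auto
    also have "\<dots> \<le> Mp * t" using mult_right_mono[OF Mp1 t0] unfolding t_def by simp
    finally show False using Mpt by simp
  qed
  define P where "P = T1 \<times> T2"
  define A where "A a = Aij (fst a) (snd a) r" for a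
  have finP: "finite P" unfolding P_def using T by simp
  have cardP: "real (card P) = Mp" unfolding P_def Mp_def using T by (simp add: card_cartesian_product power2_eq_square)
  have A_ev: "A a \<in> events" for a unfolding A_def by (rule pair_ev)
  have Feq: "?F = (\<Union>a\<in>P. A a)" unfolding P_def A_def by (auto; blast)
  have s1: "Mp * (t * (1/8)^d) \<le> (\<Sum>a\<in>P. prob (A a))"
  proof -
    have "(\<Sum>a\<in>P. (l*r/8)^d) \<le> (\<Sum>a\<in>P. prob (A a))"
    proof (intro sum_mono)
      fix a assume "a \<in> P"
      then have "fst a \<noteq> snd a" using T unfolding P_def by auto
      then show "(l*r/8)^d \<le> prob (A a)" unfolding A_def d_def using lb r lr by blast
    qed
    moreover have "(\<Sum>a\<in>P. (l*r/8)^d) = Mp * (t * (1/8)^d)"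
      using cardP by (simp add: t_def power_divide field_simps)
    ultimately show ?thesis by simp
  qed
  have n9: "(3::real)^(d*2) = 9^d"
  proof -
    have "(3::real)^(d*2) = (3^2)^d" by (metis mult.commute power_mult)
    then show ?thesis by simp
  qed
  have s2: "(\<Sum>a\<in>P. \<Sum>b\<in>P - {a}. prob (A a \<inter> A b)) \<le> Mp * (Mp * (9^d * t^2))"
  proof -
    have "(\<Sum>a\<in>P. \<Sum>b\<in>P - {a}. prob (A a \<inter> A b)) \<le> (\<Sum>a\<in>P. \<Sum>b\<in>P - {a}. (3*l*r)^(d*2))"
    proof (intro sum_mono)
      fix a b assume "a \<in> P" "b \<in> P - {a}"
      then show "prob (A a \<inter> A b) \<le> (3*l*r)^(d*2)"
        unfolding A_def d_def P_def using pair2[OF T(3) _ _ _ _ _ r] by (cases a, cases b) auto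
    qed
    also have "\<dots> \<le> (\<Sum>a\<in>P. Mp * (3*l*r)^(d*2))"
    proof (intro sum_mono)
      fix a assume "a \<in> P"
      have "real (card (P - {a})) \<le> Mp" using cardP finP by (metis card_Diff1_le of_nat_le_iff)
      then show "(\<Sum>b\<in>P - {a}. (3*l*r)^(d*2)) \<le> Mp * (3*l*r)^(d*2)"
        using lpos r by (simp add: mult_right_mono)
    qed
    also have "\<dots> = Mp * (Mp * (9^d * t^2))"
      using cardP n9 by (simp add: t_def power_mult power_mult_distrib field_simps flip: power_mult)
    finally show ?thesis .
  qed
  have B: "Mp * (9^d * t) \<le> (1/8)^d / 2"
  proof -
    have "Mp * (9^d * t) = 9^d * (Mp * t)" by simp
    also have "\<dots> \<le> 9^d * (1/144)^d" using Mpt by (intro mult_left_mono) auto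
    also have "\<dots> = (1/8)^d * (1/2)^d" by (simp add: power_mult_distrib[symmetric])
    also have "\<dots> \<le> (1/8)^d * (1/2)"
    proof (intro mult_left_mono)
      show "(1/2::real)^d \<le> 1/2" using power_decreasing[of 1 d "1/2::real"] d1 by simp
    qed simp
    finally show ?thesis by simp
  qed
  have "Mp * t * (1/8)^d / 2 \<le> Mp * (t * (1/8)^d) - Mp * (Mp * (9^d * t^2))"
  proof -
    have "Mp * (Mp * (9^d * t^2)) = (Mp * t) * (Mp * (9^d * t))" by (simp add: power2_eq_square)
    also have "\<dots> \<le> (Mp * t) * ((1/8)^d / 2)" using B Mp1 t0 by (intro mult_left_mono) auto
    finally show ?thesis by simp
  qed
  also have "\<dots> \<le> prob ?F" unfolding Feq using bonf[of P A, OF finP A_ev] s1 s2 by linarith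
  finally show ?thesis unfolding Mp_def t_def d_def by simp
qed

end


lemma blocks_eq:
  fixes a :: "nat \<Rightarrow> real"
  shows "(\<Sum>k<K. \<Sum>n\<in>{2^k..<2^Suc k}. a n) = (\<Sum>n\<in>{1..<2^K}. a n)"
proof (induction K)
  case 0 then show ?case by simp
next
  case (Suc K)
  have "(1::nat) \<le> 2^K" by simp
  moreover have "(2::nat)^K \<le> 2^Suc K" by simp
  ultimately have "(\<Sum>n\<in>{1..<2^K}. a n) + (\<Sum>n\<in>{2^K..<2^Suc K}. a n) = (\<Sum>n\<in>{1..<2^Suc K}. a n)"
    by (rule sum.atLeastLessThan_concat)
  then show ?case using Suc by simp
qed

lemma sum_split0:
  fixes a :: "nat \<Rightarrow> real" assumes "N \<ge> 1"
  shows "(\<Sum>n<N. a n) = a 0 + (\<Sum>n\<in>{1..<N}. a n)"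
proof -
  have "(\<Sum>n\<in>{0..<1}. a n) + (\<Sum>n\<in>{1..<N}. a n) = (\<Sum>n\<in>{0..<N}. a n)"
    using assms by (intro sum.atLeastLessThan_concat) auto
  then show ?thesis by (simp add: lessThan_atLeast0)
qed

lemma block_summable:
  fixes a :: "nat \<Rightarrow> real" assumes nn: "\<And>n. a n \<ge> 0" and s: "summable a"
  shows "summable (\<lambda>k. \<Sum>n\<in>{2^k..<2^Suc k}. a n)"
proof (rule summableI_nonneg_bounded)
  show "0 \<le> (\<Sum>n\<in>{2^k..<2^Suc k}. a n)" for k using nn by (simp add: sum_nonneg)
  fix K
  have "(\<Sum>k<K. \<Sum>n\<in>{2^k..<2^Suc k}. a n) = (\<Sum>n\<in>{1..<2^K}. a n)" by (rule blocks_eq)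
  also have "\<dots> \<le> (\<Sum>n<2^K. a n)" using nn by (intro sum_mono2) auto
  also have "\<dots> \<le> suminf a" using s nn by (intro sum_le_suminf) auto
  finally show "(\<Sum>k<K. \<Sum>n\<in>{2^k..<2^Suc k}. a n) \<le> suminf a" .
qed

lemma block_summable_rev:
  fixes a :: "nat \<Rightarrow> real" assumes nn: "\<And>n. a n \<ge> 0" and s: "summable (\<lambda>k. \<Sum>n\<in>{2^k..<2^Suc k}. a n)"
  shows "summable a"
proof (rule summableI_nonneg_bounded)
  show "0 \<le> a n" for n by (rule nn)
  fix N
  have "N < 2^N" by (rule less_exp)
  then have "(\<Sum>n<N. a n) \<le> (\<Sum>n<2^N. a n)" using nn by (intro sum_mono2) auto
  also have "\<dots> = a 0 + (\<Sum>n\<in>{1..<2^N}. a n)" by (rule sum_split0) simp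
  also have "\<dots> = a 0 + (\<Sum>k<N. \<Sum>n\<in>{2^k..<2^Suc k}. a n)" by (simp only: blocks_eq)
  also have "\<dots> \<le> a 0 + (\<Sum>k. \<Sum>n\<in>{2^k..<2^Suc k}. a n)"
    using s nn by (intro add_left_mono sum_le_suminf) (auto simp: sum_nonneg)
  finally show "(\<Sum>n<N. a n) \<le> a 0 + (\<Sum>k. \<Sum>n\<in>{2^k..<2^Suc k}. a n)" .
qed

lemma ex_block: "n \<ge> 1 \<Longrightarrow> \<exists>k. 2^k \<le> n \<and> n < (2::nat)^Suc k"
  using ex_power_ivl1[of 2 n] by auto



context rgg begin

lemma part1:
  fixes y :: "nat \<Rightarrow> real"
  assumes ypos: "\<And>n. y n > 0" and summ: "summable (\<lambda>n. real n * y n ^ CARD('d))" and dec: "decseq y"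
  shows "AE \<omega> in M. \<not> (\<exists>\<^sub>F n in sequentially. rgg_max_degree (\<lambda>i. X i \<omega>) n (y n) \<ge> 1)"
proof -
  define d where "d = CARD('d)"
  define a where "a n = real n * y n ^ d" for n
  have a_nn: "a n \<ge> 0" for n unfolding a_def using ypos[of n] by simp
  have decy: "m \<le> n \<Longrightarrow> y n \<le> y m" for m n using dec by (simp add: decseq_def)
  define b where "b k = (\<Sum>n\<in>{2^k..<2^Suc k}. a n)" for k
  have sb: "summable b" unfolding b_def
    by (rule block_summable[OF a_nn]) (use summ in \<open>simp add: a_def d_def\<close>)
  define f where "f k = 4^k * y (2^k) ^ d" for k
  have f_nn: "f k \<ge> 0" for k unfolding f_def using ypos[of "2^k"] by simp
  have fb: "f (Suc k) \<le> 4 * b k" for k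
  proof -
    have "(\<Sum>n\<in>{2^k..<(2::nat)^Suc k}. (2::real)^k * y (2^Suc k) ^ d) \<le> b k"
      unfolding b_def a_def
    proof (intro sum_mono)
      fix n assume n: "n \<in> {2^k..<(2::nat)^Suc k}"
      then have h1: "(2::real)^k \<le> real n" by (metis atLeastLessThan_iff of_nat_le_iff of_nat_numeral of_nat_power)
      have h2: "y (2^Suc k) ^ d \<le> y n ^ d"
        using n ypos[of "2^Suc k"] by (intro power_mono decy) auto
      show "(2::real)^k * y (2^Suc k) ^ d \<le> real n * y n ^ d"
        by (rule mult_mono[OF h1 h2]) (use ypos[of n] ypos[of "2^Suc k"] in auto)
    qed
    moreover have "(\<Sum>n\<in>{2^k..<(2::nat)^Suc k}. (2::real)^k * y (2^Suc k) ^ d) = 2^k * 2^k * y (2^Suc k) ^ d"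
      by simp
    ultimately have "2^k * 2^k * y (2^Suc k) ^ d \<le> b k" by simp
    moreover have "f (Suc k) = 4 * (2^k * 2^k * y (2^Suc k) ^ d)"
      unfolding f_def by (simp add: power_mult_distrib[symmetric])
    ultimately show ?thesis by simp
  qed
  have sf: "summable f"
  proof -
    have "summable (\<lambda>k. f (Suc k))"
      by (rule summable_comparison_test'[where g="\<lambda>k. 4 * b k"]) (use sb fb f_nn in auto)
    then show ?thesis by (simp add: summable_Suc_iff)
  qed
  define Q where "Q k = {(i, j). i \<in> {1..(2::nat)^Suc k} \<and> j \<in> {1..(2::nat)^Suc k} \<and> i \<noteq> j}" for k
  define H where "H k = (\<Union>p\<in>Q k. Aij (fst p) (snd p) (y (2^k)))" for k
  have finQ: "finite (Q k)" for k
    by (rule finite_subset[of _ "{1..2^Suc k} \<times> {1..2^Suc k}"]) (auto simp: Q_def)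
  have cardQ: "real (card (Q k)) \<le> 4^Suc k" for k
  proof -
    have "card (Q k) \<le> card ({1..(2::nat)^Suc k} \<times> {1..(2::nat)^Suc k})"
      by (rule card_mono) (auto simp: Q_def)
    also have "\<dots> = 4^Suc k" by (simp add: card_cartesian_product power_mult_distrib[symmetric])
    finally show ?thesis by (metis of_nat_le_iff of_nat_numeral of_nat_power)
  qed
  have H_ev: "H k \<in> events" for k unfolding H_def using finQ pair_ev by auto
  have H_le: "prob (H k) \<le> (4 * (3*l)^d) * f k" for k
  proof -
    have "prob (H k) \<le> (\<Sum>p\<in>Q k. prob (Aij (fst p) (snd p) (y (2^k))))"
      unfolding H_def by (intro finite_measure_subadditive_finite) (use finQ pair_ev in auto)
    also have "\<dots> \<le> (\<Sum>p\<in>Q k. (3*l*y (2^k))^d)"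
    proof (intro sum_mono)
      fix p assume "p \<in> Q k"
      then have "fst p \<noteq> snd p" unfolding Q_def by auto
      then show "prob (Aij (fst p) (snd p) (y (2^k))) \<le> (3*l*y (2^k))^d"
        unfolding d_def using ub1 ypos by blast
    qed
    also have "\<dots> = real (card (Q k)) * (3*l*y (2^k))^d" by simp
    also have "\<dots> \<le> 4^Suc k * (3*l*y (2^k))^d"
      using cardQ lpos ypos[of "2^k"] by (intro mult_right_mono) auto
    also have "\<dots> = (4 * (3*l)^d) * f k" unfolding f_def by (simp add: power_mult_distrib)
    finally show ?thesis .
  qed
  have sH: "summable (\<lambda>k. prob (H k))"
    by (rule summable_comparison_test'[where g="\<lambda>k. (4 * (3*l)^d) * f k"])
       (use sf H_le in \<open>auto intro: summable_mult\<close>)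
  have "AE \<omega> in M. eventually (\<lambda>k. \<omega> \<in> space M - H k) sequentially"
    by (rule borel_cantelli_AE1) (use H_ev sH in \<open>auto simp: emeasure_eq_measure\<close>)
  then show ?thesis
  proof (rule AE_mp, intro AE_I2 impI)
    fix \<omega> assume w: "\<omega> \<in> space M" and ev: "eventually (\<lambda>k. \<omega> \<in> space M - H k) sequentially"
    then obtain K where K: "\<And>k. k \<ge> K \<Longrightarrow> \<omega> \<notin> H k" by (auto simp: eventually_sequentially)
    have "\<forall>n\<ge>(2::nat)^K. \<not> rgg_max_degree (\<lambda>i. X i \<omega>) n (y n) \<ge> 1"
    proof (intro allI impI)
      fix n :: nat assume n: "n \<ge> 2^K"
      then have n1: "n \<ge> 1" using one_le_power[of "2::nat" K] by linarith
      obtain k where k: "2^k \<le> n" "n < (2::nat)^Suc k" using ex_block[OF n1] by blast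
      have "K < Suc k" using n k(2) by (metis le_less_trans nat_power_less_imp_less zero_less_numeral)
      then have kK: "k \<ge> K" by simp
      show "\<not> rgg_max_degree (\<lambda>i. X i \<omega>) n (y n) \<ge> 1"
      proof
        assume "rgg_max_degree (\<lambda>i. X i \<omega>) n (y n) \<ge> 1"
        then obtain i j where ij: "i \<in> {1..n}" "j \<in> {1..n}" "j \<noteq> i" "linf_dist (X i \<omega>) (X j \<omega>) \<le> y n"
          unfolding maxdeg_ge1 by blast
        have "y n \<le> y (2^k)" using k by (intro decy) auto
        then have "\<omega> \<in> Aij i j (y (2^k))" using ij w by auto
        moreover have "(i, j) \<in> Q k" using ij k unfolding Q_def by auto
        ultimately have "\<omega> \<in> H k" unfolding H_def by force
        then show False using K kK by blast
      qed
    qed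
    then have "eventually (\<lambda>n. \<not> rgg_max_degree (\<lambda>i. X i \<omega>) n (y n) \<ge> 1) sequentially"
      unfolding eventually_sequentially by blast
    then show "\<not> (\<exists>\<^sub>F n in sequentially. rgg_max_degree (\<lambda>i. X i \<omega>) n (y n) \<ge> 1)"
      by (simp add: not_frequently)
  qed
qed

end


context rgg begin

lemma part2:
  fixes y :: "nat \<Rightarrow> real"
  assumes ypos: "\<And>n. y n > 0" and ns: "\<not> summable (\<lambda>n. real n * y n ^ CARD('d))"
  shows "AE \<omega> in M. (\<exists>\<^sub>F n in sequentially. rgg_max_degree (\<lambda>i. X i \<omega>) n (y n) \<ge> 1)"
proof -
  define d where "d = CARD('d)"
  have d1: "d \<ge> 1" unfolding d_def by (simp add: Suc_le_eq)
  define a where "a n = real n * y n ^ d" for n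
  have a_nn: "a n \<ge> 0" for n unfolding a_def using ypos[of n] by simp
  define B where "B k = {(2::nat)^(k+2)..<2^(k+3)}" for k
  have "\<exists>n\<in>B k. \<forall>m\<in>B k. y m \<le> y n" for k
  proof -
    have fin: "finite (y ` B k)" unfolding B_def by simp
    have ne: "y ` B k \<noteq> {}" unfolding B_def by (simp add: power_add)
    obtain n where n: "n \<in> B k" "y n = Max (y ` B k)" using Max_in[OF fin ne] by auto
    show ?thesis
    proof (intro bexI[OF _ n(1)] ballI)
      fix m assume m: "m \<in> B k"
      have "y m \<le> Max (y ` B k)" using m by (intro Max_ge[OF fin]) simp
      then show "y m \<le> y n" using n(2) by simp
    qed
  qed
  then obtain nk where nkB: "\<And>k. nk k \<in> B k" and nkmax: "\<And>k m. m \<in> B k \<Longrightarrow> y m \<le> y (nk k)"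
    by metis
  define T1 where "T1 k = {(2::nat)^(k+1) <.. 2^(k+1) + 2^k}" for k
  define T2 where "T2 k = {(2::nat)^(k+1) + 2^k <.. 2^(k+2)}" for k
  define \<rho> where "\<rho> k = root d (1/4^k) / (144*l)" for k
  define r where "r k = min (y (nk k)) (\<rho> k)" for k
  define Fk where "Fk k = {\<omega>\<in>space M. \<exists>i\<in>T1 k. \<exists>j\<in>T2 k. linf_dist (X i \<omega>) (X j \<omega>) \<le> r k}" for k
  define s where "s k = min (4^k * (l * y (nk k))^d) ((1/144)^d)" for k
  have \<rho>pos: "\<rho> k > 0" for k unfolding \<rho>_def using lpos d1 by simp
  have rpos: "r k > 0" for k unfolding r_def using \<rho>pos ypos by simp
  have l\<rho>: "4^k * (l * \<rho> k)^d = (1/144)^d" for k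
  proof -
    have "l * \<rho> k = root d (1/4^k) / 144" unfolding \<rho>_def using lpos by simp
    moreover have r1: "(root d (1/4^k))^d = 1/4^k" using d1 by simp
    ultimately have "(l * \<rho> k)^d = (1/4^k) / 144^d" by (simp only: power_divide)
    then show ?thesis by (simp add: power_divide)
  qed
  have key_r: "4^k * (l * r k)^d = s k" for k
  proof (cases "y (nk k) \<le> \<rho> k")
    case True
    then have "(l * y (nk k))^d \<le> (l * \<rho> k)^d" using lpos ypos[of "nk k"] by (intro power_mono mult_left_mono) auto
    then have "4^k * (l * y (nk k))^d \<le> (1/144)^d" using l\<rho>[of k] by (metis mult_left_mono zero_le_numeral zero_le_power)
    then show ?thesis unfolding r_def s_def using True by simp
  next
    case False
    then have "(l * \<rho> k)^d \<le> (l * y (nk k))^d" using lpos \<rho>pos[of k] by (intro power_mono mult_left_mono) auto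
    then have "(1/144)^d \<le> 4^k * (l * y (nk k))^d" using l\<rho>[of k] by (metis mult_left_mono zero_le_numeral zero_le_power)
    then show ?thesis unfolding r_def s_def using False l\<rho>[of k] by simp
  qed
  have s_nn: "s k \<ge> 0" for k unfolding s_def using lpos ypos[of "nk k"] by simp
  have cardT: "card (T1 k) = 2^k" "card (T2 k) = 2^k" for k
    unfolding T1_def T2_def by (simp_all add: power_add)
  have pF: "(1/8)^d / 2 * s k \<le> prob (Fk k)" for k
  proof -
    have "real (2^k) ^ 2 * (l * r k)^CARD('d) * (1/8)^CARD('d) / 2 \<le> prob (Fk k)"
      unfolding Fk_def
    proof (rule block_lb[OF _ _ _ cardT(1) cardT(2) rpos])
      show "finite (T1 k)" "finite (T2 k)" unfolding T1_def T2_def by auto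
      show "T1 k \<inter> T2 k = {}" unfolding T1_def T2_def by auto
      have "real (2^k) ^ 2 = (4::real)^k" by (simp add: power_mult_distrib[symmetric] power2_eq_square flip: power_mult)
      then show "real (2^k) ^ 2 * (l * r k)^CARD('d) \<le> (1/144)^CARD('d)"
        using key_r[of k] unfolding s_def d_def by simp
    qed
    moreover have "real (2^k) ^ 2 = (4::real)^k" by (simp add: power_mult_distrib[symmetric] power2_eq_square flip: power_mult)
    ultimately show ?thesis using key_r[of k] unfolding d_def by (simp add: field_simps)
  qed
  have ns_s: "\<not> summable s"
  proof
    assume ss: "summable s"
    then have "s \<longlonglongrightarrow> 0" by (rule summable_LIMSEQ_zero)
    then have "eventually (\<lambda>k. s k < (1/144)^d) sequentially"
      by (rule order_tendstoD(2)) simp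
    then have "eventually (\<lambda>k. s k = l^d * (4^k * y (nk k)^d)) sequentially"
      by eventually_elim (auto simp: s_def min_def power_mult_distrib split: if_splits)
    then have "summable (\<lambda>k. l^d * (4^k * y (nk k)^d))"
      using ss summable_cong by fastforce
    then have sy: "summable (\<lambda>k. 4^k * y (nk k)^d)" using lpos by simp
    define b where "b k = (\<Sum>n\<in>{2^k..<2^Suc k}. a n)" for k
    have bk: "b (k + 2) \<le> 32 * (4^k * y (nk k)^d)" for k
    proof -
      have "b (k + 2) = (\<Sum>n\<in>B k. a n)" unfolding b_def B_def by (simp add: numeral_3_eq_3)
      also have "\<dots> \<le> (\<Sum>n\<in>B k. 2^(k+3) * y (nk k)^d)"
      proof (intro sum_mono)
        fix n assume n: "n \<in> B k"
        then have "real n \<le> 2^(k+3)" unfolding B_def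
          by (metis atLeastLessThan_iff less_imp_le_nat of_nat_le_iff of_nat_numeral of_nat_power)
        moreover have "y n ^ d \<le> y (nk k) ^ d" using nkmax[OF n] ypos[of n] by (intro power_mono) auto
        ultimately show "a n \<le> 2^(k+3) * y (nk k)^d"
          unfolding a_def using ypos[of n] by (intro mult_mono) auto
      qed
      also have "\<dots> = real (card (B k)) * 2^(k+3) * y (nk k)^d" by simp
      also have "real (card (B k)) = 2^(k+2)" unfolding B_def by (simp add: power_add)
      also have "(2::real)^(k+2) * 2^(k+3) * y (nk k)^d = 32 * (4^k * y (nk k)^d)"
        by (simp add: power_add power_mult_distrib[symmetric])
      finally show ?thesis .
    qed
    have "summable (\<lambda>k. b (k + 2))"
      by (rule summable_comparison_test'[where g="\<lambda>k. 32 * (4^k * y (nk k)^d)"])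
         (use sy bk a_nn in \<open>auto simp: b_def sum_nonneg\<close>)
    then have "summable b" by (simp only: summable_iff_shift)
    then have "summable a" unfolding b_def by (rule block_summable_rev[OF a_nn])
    then show False using ns unfolding a_def d_def by simp
  qed
  define p where "p k = prob (Fk k)" for k
  have p_nn: "p k \<ge> 0" for k unfolding p_def by simp
  have ns_p: "\<not> summable p"
  proof
    assume sp: "summable p"
    have "summable (\<lambda>k. (1/8)^d / 2 * s k)"
      by (rule summable_comparison_test'[where g=p]) (use sp pF s_nn in \<open>auto simp: p_def\<close>)
    then show False using ns_s by simp
  qed
  define U where "U k = {(2::nat)^(k+1) <.. 2^(k+2)}" for k
  define I where "I k = U k \<times> (UNIV :: 'd set)" for k
  define C where "C k = space M - Fk k" for k
  have T1U: "T1 k \<subseteq> U k" and T2U: "T2 k \<subseteq> U k" for k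
    unfolding T1_def T2_def U_def by (auto simp: power_add)
  have Fk_g: "Fk k \<in> sets (gsig (I k))" for k
  proof -
    have "Fk k = (\<Union>i\<in>T1 k. \<Union>j\<in>T2 k. Aij i j (r k))" unfolding Fk_def by auto
    also have "\<dots> \<in> sets (gsig (I k))"
    proof (intro sets.finite_UN)
      show "finite (T1 k)" "finite (T2 k)" unfolding T1_def T2_def by auto
      fix i j assume "i \<in> T1 k" "j \<in> T2 k"
      then show "Aij i j (r k) \<in> sets (gsig (I k))"
        using T1U T2U by (intro pair_gsig) (auto simp: I_def)
    qed
    finally show ?thesis .
  qed
  have F_ev: "Fk k \<in> events" for k using Fk_g gsig_events by blast
  have C_g: "C k \<in> sets (gsig (I k))" for k
    unfolding C_def using sets.compl_sets[OF Fk_g[of k]] by simp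
  have C_ev: "C k \<in> events" for k using C_g gsig_events by blast
  have disjI: "disjoint_family_on I UNIV"
  proof -
    have "U k \<inter> U k' = {}" if "k < k'" for k k'
    proof -
      have "(2::nat)^(k+2) \<le> 2^(k'+1)" using that by (intro power_increasing) auto
      then show ?thesis unfolding U_def by auto
    qed
    then show ?thesis unfolding disjoint_family_on_def I_def
      by (metis Sigma_Int_distrib1 Sigma_empty1 inf_commute linorder_neqE_nat)
  qed
  have indC: "indep_events C UNIV" by (rule indep_gsig[OF disjI C_g])
  have zero: "prob (\<Inter>k\<in>{K..}. C k) = 0" for K
  proof (rule ccontr)
    define \<delta> where "\<delta> = prob (\<Inter>k\<in>{K..}. C k)"
    assume "prob (\<Inter>k\<in>{K..}. C k) \<noteq> 0"
    moreover have "prob (\<Inter>k\<in>{K..}. C k) \<ge> 0" by (rule measure_nonneg)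
    ultimately have \<delta>pos: "\<delta> > 0" unfolding \<delta>_def by linarith
    have bnd: "(\<Sum>k\<in>{K..<K + Suc n}. p k) \<le> - ln \<delta>" for n
    proof -
      define J where "J = {K..<K + Suc n}"
      have J: "finite J" "J \<noteq> {}" unfolding J_def by auto
      have "\<delta> \<le> prob (\<Inter>k\<in>J. C k)"
        unfolding \<delta>_def using J C_ev by (intro finite_measure_mono) (auto simp: J_def)
      also have "\<dots> = (\<Prod>k\<in>J. prob (C k))"
        using indC J unfolding indep_events_def by auto
      also have "\<dots> = (\<Prod>k\<in>J. 1 - p k)"
        unfolding C_def p_def using F_ev by (simp add: prob_compl)
      also have "\<dots> \<le> (\<Prod>k\<in>J. exp (- p k))"
      proof (intro prod_mono conjI)
        fix k show "0 \<le> 1 - p k" unfolding p_def by simp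
        show "1 - p k \<le> exp (- p k)" using exp_ge_add_one_self[of "- p k"] by simp
      qed
      also have "\<dots> = exp (- (\<Sum>k\<in>J. p k))"
        using exp_sum[OF J(1), of "\<lambda>k. - p k"] by (simp add: sum_negf)
      finally have "\<delta> \<le> exp (- (\<Sum>k\<in>J. p k))" .
      then have "ln \<delta> \<le> ln (exp (- (\<Sum>k\<in>J. p k)))" using \<delta>pos by (subst ln_le_cancel_iff) auto
      then have "ln \<delta> \<le> - (\<Sum>k\<in>J. p k)" by simp
      then show ?thesis unfolding J_def by simp
    qed
    have "summable p"
    proof (rule summableI_nonneg_bounded)
      show "0 \<le> p k" for k by (rule p_nn)
      fix n
      have "(\<Sum>k<n. p k) \<le> (\<Sum>k<K + Suc n. p k)" using p_nn by (intro sum_mono2) auto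
      also have "\<dots> = (\<Sum>k\<in>{0..<K}. p k) + (\<Sum>k\<in>{K..<K + Suc n}. p k)"
        by (simp add: lessThan_atLeast0 sum.atLeastLessThan_concat)
      also have "\<dots> \<le> (\<Sum>k<K. p k) + - ln \<delta>" using bnd[of n] by (simp add: lessThan_atLeast0)
      finally show "(\<Sum>k<n. p k) \<le> (\<Sum>k<K. p k) + - ln \<delta>" .
    qed
    then show False using ns_p by simp
  qed
  have "AE \<omega> in M. \<forall>K. \<omega> \<notin> (\<Inter>k\<in>{K..}. C k)"
  proof (subst AE_all_countable, intro allI)
    fix K :: nat
    have "(\<Inter>k\<in>{K..}. C k) \<in> events"
      using C_ev by (intro sets.countable_INT') auto
    then show "AE \<omega> in M. \<omega> \<notin> (\<Inter>k\<in>{K..}. C k)" using zero[of K] by (simp add: prob_eq_0)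
  qed
  then show ?thesis
  proof (rule AE_mp, intro AE_I2 impI)
    fix \<omega> assume w: "\<omega> \<in> space M" and nC: "\<forall>K. \<omega> \<notin> (\<Inter>k\<in>{K..}. C k)"
    show "\<exists>\<^sub>F n in sequentially. rgg_max_degree (\<lambda>i. X i \<omega>) n (y n) \<ge> 1"
      unfolding frequently_sequentially
    proof
      fix N :: nat
      obtain k where k: "k \<ge> N" "\<omega> \<in> Fk k" using nC[rule_format, of N] w unfolding C_def by auto
      then obtain i j where ij: "i \<in> T1 k" "j \<in> T2 k" "linf_dist (X i \<omega>) (X j \<omega>) \<le> r k"
        unfolding Fk_def by auto
      have nk1: "2^(k+2) \<le> nk k" using nkB[of k] unfolding B_def by auto
      have "N \<le> 2^(k+2)" using k(1)
        by (metis add_lessD1 less_exp less_imp_le_nat order_le_less_trans not_le)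
      then have Nn: "N \<le> nk k" using nk1 by linarith
      have "i \<in> {1..nk k}" "j \<in> {1..nk k}" "j \<noteq> i"
        using ij(1,2) nk1 T1U T2U unfolding T1_def T2_def by (auto simp: power_add)
      moreover have "linf_dist (X i \<omega>) (X j \<omega>) \<le> y (nk k)" using ij(3) unfolding r_def by simp
      ultimately have "rgg_max_degree (\<lambda>i. X i \<omega>) (nk k) (y (nk k)) \<ge> 1"
        unfolding maxdeg_ge1 by blast
      then show "\<exists>n\<ge>N. rgg_max_degree (\<lambda>i. X i \<omega>) n (y n) \<ge> 1" using Nn by blast
    qed
  qed
qed

end


context rgg begin

lemma S_sets:
  fixes y :: "nat \<Rightarrow> real"
  shows "{\<omega> \<in> space M. \<exists>\<^sub>F n in sequentially. rgg_max_degree (\<lambda>i. X i \<omega>) n (y n) \<ge> 1} \<in> events"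
proof -
  define D where "D n = (\<Union>i\<in>{1..n}. \<Union>j\<in>{1..n} - {i}. Aij i j (y n))" for n
  have D_ev: "D n \<in> events" for n unfolding D_def using pair_ev by auto
  have "{\<omega> \<in> space M. \<exists>\<^sub>F n in sequentially. rgg_max_degree (\<lambda>i. X i \<omega>) n (y n) \<ge> 1}
      = (\<Inter>N. \<Union>n\<in>{N..}. D n)"
    unfolding frequently_sequentially maxdeg_ge1 D_def by (auto simp: Bex_def)
  also have "\<dots> \<in> events" using D_ev by auto
  finally show ?thesis .
qed

end

theorem theorem3:
  fixes M :: "'a measure" and X :: "nat \<Rightarrow> 'a \<Rightarrow> real ^ 'd" and l :: real
    and y :: "nat \<Rightarrow> real"
  assumes "prob_space M"
    and "l > 0"
    and "prob_space.indep_vars M (\<lambda>_. borel) (\<lambda>(n, k) \<omega>. X n \<omega> $ k) UNIV"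
    and "\<And>n k. distributed M lborel (\<lambda>\<omega>. X n \<omega> $ k) (exponential_density l)"
    and "\<And>n. y n > 0"
  shows "(summable (\<lambda>n. real n * y n ^ CARD('d)) \<and> decseq y \<longrightarrow>
           {\<omega> \<in> space M. \<exists>\<^sub>F n in sequentially. rgg_max_degree (\<lambda>i. X i \<omega>) n (y n) \<ge> 1} \<in> sets M \<and>
           measure M {\<omega> \<in> space M. \<exists>\<^sub>F n in sequentially. rgg_max_degree (\<lambda>i. X i \<omega>) n (y n) \<ge> 1} = 0)
       \<and> (\<not> summable (\<lambda>n. real n * y n ^ CARD('d)) \<longrightarrow>
           {\<omega> \<in> space M. \<exists>\<^sub>F n in sequentially. rgg_max_degree (\<lambda>i. X i \<omega>) n (y n) \<ge> 1} \<in> sets M \<and>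
           measure M {\<omega> \<in> space M. \<exists>\<^sub>F n in sequentially. rgg_max_degree (\<lambda>i. X i \<omega>) n (y n) \<ge> 1} = 1)"
proof -
  have "rgg M X l" unfolding rgg_def rgg_axioms_def using assms(1-4) by auto
  then interpret rgg M X l .
  let ?S = "{\<omega> \<in> space M. \<exists>\<^sub>F n in sequentially. rgg_max_degree (\<lambda>i. X i \<omega>) n (y n) \<ge> 1}"
  have Sev: "?S \<in> sets M" by (rule S_sets)
  show ?thesis
  proof (intro conjI impI)
    assume h: "summable (\<lambda>n. real n * y n ^ CARD('d)) \<and> decseq y"
    show "?S \<in> sets M" by (rule Sev)
    have "AE \<omega> in M. \<not> (\<exists>\<^sub>F n in sequentially. rgg_max_degree (\<lambda>i. X i \<omega>) n (y n) \<ge> 1)"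
      using part1[of y] assms(5) h by blast
    then have "AE \<omega> in M. \<omega> \<notin> ?S" by eventually_elim auto
    then show "measure M ?S = 0" using prob_eq_0[OF Sev] by simp
  next
    assume h: "\<not> summable (\<lambda>n. real n * y n ^ CARD('d))"
    show "?S \<in> sets M" by (rule Sev)
    have "AE \<omega> in M. (\<exists>\<^sub>F n in sequentially. rgg_max_degree (\<lambda>i. X i \<omega>) n (y n) \<ge> 1)"
      using part2[of y] assms(5) h by blast
    then have "AE \<omega> in M. \<omega> \<in> ?S" using AE_space by eventually_elim auto
    then show "measure M ?S = 1" using prob_eq_1[OF Sev] by simp
  qed
qed


end
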